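(* Let $\mathcal{S}=\{s_1,\dots,s_M\}$ and let $\{S(\tau)\}_{\tau\ge 0}$ be independent $\mathcal{S}$-valued random variables with $\Pr\{S(\tau)=s_i\}=\pi_i(\tau)$. Fix a time $t$, a prediction window parameter $w\ge 0$, an integer $d\ge w+1$ with $t+w+1-d\ge 0$, and predicted distributions $\hat{\boldsymbol\pi}(t+k)$, $k=0,\dots,w$, satisfying $\|\hat{\boldsymbol\pi}(t+k)-\boldsymbol\pi(t+k)\|_{tv}\le e(k)$; put $e_w=\frac{1}{w+1}\sum_{k=0}^w e(k)$. Define $$\hat\pi^d_i=\frac1d\Big(\sum_{\tau=t+w+1-d}^{t-1}\mathbf 1_{[S(\tau)=s_i]}+\sum_{k=0}^{w}\hat\pi_i(t+k)\Big),$$ and let $\mathcal W_m$ be a set of $n_m\ge d$ time slots, all strictly smaller than $t+w+1-d$, with $\hat\pi^m_i=\frac1{n_m}\sum_{\tau\in\mathcal W_m}\mathbf 1_{[S(\tau)=s_i]}$. Suppose $\boldsymbol\pi(\tau)=\boldsymbol\pi_1$ for all $\tau\in\{t+w+1-d,\dots,t+w\}$ and $\boldsymbol\pi(\tau)=\boldsymbol\pi_2\neq\boldsymbol\pi_1$ for all $\tau\in\mathcal W_m$, and that $\max_i|\pi_{1i}-\pi_{2i}|>4(w+1)e_w/d$. Let $\delta\in(0,1)$, and let $\epsilon_d$ satisfy $0<\epsilon_d<\epsilon_0:=\tfrac12\max_i|\pi_{1i}-\pi_{2i}|-(w+1)e_w/d$ and $d>\ln\frac4\delta\cdot\frac{1}{2\epsilon_d^2}+w+1$.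 Then with probability at least $1-\delta$, $$\|\hat{\boldsymbol\pi}^d-\hat{\boldsymbol\pi}^m\|_{tv}>\epsilon_d,$$ i.e. the change test in step (i) of the ADE procedure fires at time $t$, so that ADE resets both windows to start at $t+w+1$ (the window $\mathcal W_m$ becomes empty).
   Context: For distributions $\boldsymbol\pi_1,\boldsymbol\pi_2$ on $\mathcal S$, $\|\boldsymbol\pi_1-\boldsymbol\pi_2\|_{tv}:=\sum_i|\pi_{1i}-\pi_{2i}|$. The ADE (average distribution estimate) procedure maintains a "detection window" consisting of the $d$ most recent samples, namely the observed states in slots $t+w+1-d,\dots,t-1$ together with the $w+1$ predicted distributions for slots $t,\dots,t+w$ (its estimate is $\hat{\boldsymbol\pi}^d$ above), and an earlier "memory window" $\mathcal W_m$ of observed states (estimate $\hat{\boldsymbol\pi}^m$). Its step (i) reads: if $|\mathcal W_m|\ge d$ and $\|\hat{\boldsymbol\pi}^d-\hat{\boldsymbol\pi}^m\|_{tv}>\epsilon_d$, declare a distribution change and restart both windows at slot $t+w+1$. *)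

theory Defs
  imports "HOL-Probability.Probability"
begin

text \<open>States: the finite type 'b (so the state space S = UNIV, M = CARD('b)).
  Distributions on states are functions 'b => real.\<close>

definition tv_dist :: "('b::finite \<Rightarrow> real) \<Rightarrow> ('b \<Rightarrow> real) \<Rightarrow> real" where
  "tv_dist p q = (\<Sum>s\<in>UNIV. \<bar>p s - q s\<bar>)"

definition is_distr :: "('b::finite \<Rightarrow> real) \<Rightarrow> bool" where
  "is_distr p \<longleftrightarrow> (\<forall>s. 0 \<le> p s) \<and> (\<Sum>s\<in>UNIV. p s) = 1"

definition state_distr :: "'a measure \<Rightarrow> (nat \<Rightarrow> 'a \<Rightarrow> 'b) \<Rightarrow> nat \<Rightarrow> 'b \<Rightarrow> real" where
  "state_distr P S tau s = measure P {\<omega> \<in> space P. S tau \<omega> = s}"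

definition det_est :: "(nat \<Rightarrow> 'a \<Rightarrow> 'b) \<Rightarrow> (nat \<Rightarrow> 'b \<Rightarrow> real) \<Rightarrow> nat \<Rightarrow> nat \<Rightarrow> nat \<Rightarrow> 'a \<Rightarrow> 'b \<Rightarrow> real" where
  "det_est S phat t w d \<omega> s =
     (1 / real d) * ((\<Sum>tau\<in>{t + w + 1 - d..<t}. (if S tau \<omega> = s then 1 else 0))
                     + (\<Sum>k\<le>w. phat (t + k) s))"

definition mem_est :: "(nat \<Rightarrow> 'a \<Rightarrow> 'b) \<Rightarrow> nat set \<Rightarrow> 'a \<Rightarrow> 'b \<Rightarrow> real" where
  "mem_est S Wm \<omega> s = (1 / real (card Wm)) * (\<Sum>tau\<in>Wm. (if S tau \<omega> = s then 1 else 0))"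

end

theory Submission
  imports Defs "HOL-Probability.Hoeffding"
begin

lemma tv_ge_2:
  fixes p q :: "'b::finite \<Rightarrow> real"
  assumes "(\<Sum>s\<in>UNIV. p s) = (\<Sum>s\<in>UNIV. q s)"
  shows "tv_dist p q \<ge> 2 * \<bar>p i - q i\<bar>"
proof -
  have split: "(\<Sum>s\<in>UNIV. f s) = f i + (\<Sum>s\<in>UNIV-{i}. f s)" for f :: "'b \<Rightarrow> real"
    by (simp add: sum.remove)
  have "(\<Sum>s\<in>UNIV-{i}. p s - q s) = q i - p i"
    using assms split[of p] split[of q] by (simp add: sum_subtractf)
  moreover have "\<bar>\<Sum>s\<in>UNIV-{i}. p s - q s\<bar> \<le> (\<Sum>s\<in>UNIV-{i}. \<bar>p s - q s\<bar>)"
    by (rule sum_abs)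
  ultimately show ?thesis
    unfolding tv_dist_def using split[of "\<lambda>s. \<bar>p s - q s\<bar>"] by simp
qed

lemma aux: "M - R - Q \<le> (x::real) \<Longrightarrow> Q \<le> E \<Longrightarrow> R < 3/2*e \<Longrightarrow> e < m/2 - E
   \<Longrightarrow> 0 \<le> E \<Longrightarrow> m = M \<Longrightarrow> e/2 < x"
  by linarith

theorem lemma1:
  fixes P :: "'a measure"
    and S :: "nat \<Rightarrow> 'a \<Rightarrow> 'b::finite"
    and phat :: "nat \<Rightarrow> 'b \<Rightarrow> real"
    and e :: "nat \<Rightarrow> real"
    and t w d :: nat
    and Wm :: "nat set"
    and pi1 pi2 :: "'b \<Rightarrow> real"
    and \<delta> \<epsilon>d :: real
  assumes "prob_space P"
    and "\<And>tau. S tau \<in> measurable P (count_space UNIV)"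
    and "prob_space.indep_vars P (\<lambda>_. count_space UNIV) S UNIV"
    and "d \<ge> w + 1" and "d \<le> t + w + 1"
    and "\<And>k. k \<le> w \<Longrightarrow> is_distr (phat (t + k))"
    and "\<And>k. k \<le> w \<Longrightarrow> tv_dist (phat (t + k)) (state_distr P S (t + k)) \<le> e k"
    and "finite Wm" and "card Wm \<ge> d"
    and "\<And>tau. tau \<in> Wm \<Longrightarrow> tau < t + w + 1 - d"
    and "\<And>tau. tau \<in> {t + w + 1 - d..t + w} \<Longrightarrow> state_distr P S tau = pi1"
    and "\<And>tau. tau \<in> Wm \<Longrightarrow> state_distr P S tau = pi2"
    and "pi2 \<noteq> pi1"
    and "Max (range (\<lambda>s. \<bar>pi1 s - pi2 s\<bar>))
           > 4 * (w + 1) * ((\<Sum>k\<le>w. e k) / (w + 1)) / d"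
    and "0 < \<delta>" and "\<delta> < 1"
    and "0 < \<epsilon>d"
    and "\<epsilon>d < Max (range (\<lambda>s. \<bar>pi1 s - pi2 s\<bar>)) / 2
                 - (w + 1) * ((\<Sum>k\<le>w. e k) / (w + 1)) / d"
    and "real d > ln (4 / \<delta>) * (1 / (2 * \<epsilon>d ^ 2)) + (w + 1)"
  shows "prob_space.prob P
           {\<omega> \<in> space P. tv_dist (det_est S phat t w d \<omega>) (mem_est S Wm \<omega>) > \<epsilon>d}
         \<ge> 1 - \<delta>"
proof -
  interpret prob_space P by fact
  note Smeas[measurable] = assms(2)
  define m where "m = Max (range (\<lambda>s. \<bar>pi1 s - pi2 s\<bar>))"
  have "m \<in> range (\<lambda>s. \<bar>pi1 s - pi2 s\<bar>)" unfolding m_def by (rule Max_in) auto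
  then obtain i0 where m_i0: "m = \<bar>pi1 i0 - pi2 i0\<bar>" by auto
  define E where "E = (\<Sum>k\<le>w. e k) / d"
  have E_eq: "(w + 1) * ((\<Sum>k\<le>w. e k) / (w + 1)) / d = E"
    unfolding E_def by simp
  have e_nn: "e k \<ge> 0" if "k \<le> w" for k
  proof -
    have "0 \<le> tv_dist (phat (t + k)) (state_distr P S (t + k))"
      unfolding tv_dist_def by (simp add: sum_nonneg)
    then show ?thesis using assms(7)[OF that] by linarith
  qed
  have E_nn: "E \<ge> 0" unfolding E_def by (intro divide_nonneg_nonneg sum_nonneg) (auto simp: e_nn)
  have eps_lt: "\<epsilon>d < m / 2 - E" using assms(18) E_eq unfolding m_def by simp
  define L where "L = {t + w + 1 - d..<t}"
  define nd where "nd = card L"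
  define nm where "nm = card Wm"
  have nd_eq: "real nd + real w + 1 = real d"
    unfolding nd_def L_def using assms(4,5) by simp
  have lnpos: "ln (4 / \<delta>) > 0" using assms(15,16) by simp
  have d_bound: "real d * \<epsilon>d ^ 2 * 2 \<ge> ln (4 / \<delta>)"
  proof -
    have "real d \<ge> ln (4 / \<delta>) / (2 * \<epsilon>d ^ 2)" using assms(19) by simp
    then show ?thesis using assms(17) by (simp add: field_simps)
  qed
  have dpos: "real d > 0" using assms(4) by simp
  have nm_ge: "real nm \<ge> real d" unfolding nm_def using assms(9) by simp
  have nmpos: "real nm > 0" using dpos nm_ge by simp
  have disj: "L \<inter> Wm = {}" unfolding L_def using assms(10) by force
  define ind where "ind = (\<lambda>tau \<omega>. if S tau \<omega> = i0 then 1 else (0::real))"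
  define X where "X = (\<lambda>tau \<omega>. if tau \<in> L then ind tau \<omega> / d else - ind tau \<omega> / nm)"
  define lo where "lo = (\<lambda>tau. if tau \<in> L then 0 else - 1 / real nm)"
  define hi where "hi = (\<lambda>tau. if tau \<in> L then 1 / real d else 0)"
  define I where "I = L \<union> Wm"
  have finI: "finite I" unfolding I_def L_def using assms(8) by simp
  have indmeas[measurable]: "ind tau \<in> borel_measurable P" for tau
    unfolding ind_def by measurable
  have Xmeas[measurable]: "X tau \<in> borel_measurable P" for tau
    unfolding X_def by measurable
  have exp_ind: "expectation (ind tau) = state_distr P S tau i0" for tau
  proof -
    have "expectation (ind tau) = expectation (indicator {\<omega> \<in> space P. S tau \<omega> = i0})"
      by (rule Bochner_Integration.integral_cong) (auto simp: ind_def)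
    also have "\<dots> = state_distr P S tau i0"
      unfolding state_distr_def by (simp add: Int_absorb2 Collect_subset)
    finally show ?thesis .
  qed
  have indep: "indep_vars (\<lambda>_. borel) X I"
  proof -
    have "indep_vars (\<lambda>_. count_space UNIV) S I"
      using indep_vars_subset[OF assms(3)] by simp
    then have "indep_vars (\<lambda>_. borel) (\<lambda>tau \<omega>. (\<lambda>s. if tau \<in> L then (if s = i0 then 1 else 0) / real d
          else - (if s = i0 then 1 else 0) / real nm) (S tau \<omega>)) I"
      by (rule indep_vars_compose2) auto
    then show ?thesis unfolding X_def ind_def by simp
  qed
  interpret H: Hoeffding_ineq P I X lo hi "\<Sum>i\<in>I. expectation (X i)"
  proof unfold_locales
    show "finite I" by fact
    show "indep_vars (\<lambda>_. borel) X I" by fact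
    fix i assume "i \<in> I"
    show "AE x in P. X i x \<in> {lo i..hi i}"
      using dpos nmpos by (intro AE_I2) (auto simp: X_def lo_def hi_def ind_def)
  qed simp
  define \<mu> where "\<mu> = (\<Sum>i\<in>I. expectation (X i))"
  have mu_eq: "\<mu> = real nd * pi1 i0 / d - pi2 i0"
  proof -
    have "\<mu> = (\<Sum>i\<in>L. expectation (X i)) + (\<Sum>i\<in>Wm. expectation (X i))"
      unfolding \<mu>_def I_def using disj assms(8) by (simp add: L_def sum.union_disjoint)
    also have "(\<Sum>i\<in>L. expectation (X i)) = (\<Sum>i\<in>L. pi1 i0 / d)"
    proof (rule sum.cong)
      fix i assume i: "i \<in> L"
      then have "i \<in> {t + w + 1 - d..t + w}" unfolding L_def by auto
      then show "expectation (X i) = pi1 i0 / d"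
        using i exp_ind[of i] assms(11) unfolding X_def by simp
    qed simp
    also have "(\<Sum>i\<in>Wm. expectation (X i)) = (\<Sum>i\<in>Wm. - pi2 i0 / nm)"
    proof (rule sum.cong)
      fix i assume i: "i \<in> Wm"
      then have "i \<notin> L" using disj by auto
      then show "expectation (X i) = - pi2 i0 / nm"
        using i exp_ind[of i] assms(12) unfolding X_def by simp
    qed simp
    finally show ?thesis using nmpos unfolding nd_def nm_def by simp
  qed
  have V_eq: "(\<Sum>i\<in>I. (hi i - lo i)\<^sup>2) = real nd / d^2 + 1 / nm"
  proof -
    have "(\<Sum>i\<in>I. (hi i - lo i)\<^sup>2) = (\<Sum>i\<in>L. (hi i - lo i)\<^sup>2) + (\<Sum>i\<in>Wm. (hi i - lo i)\<^sup>2)"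
      unfolding I_def using disj assms(8) by (simp add: L_def sum.union_disjoint)
    also have "(\<Sum>i\<in>L. (hi i - lo i)\<^sup>2) = (\<Sum>i\<in>L. 1 / d^2)"
      by (rule sum.cong) (auto simp: hi_def lo_def power_divide)
    also have "(\<Sum>i\<in>Wm. (hi i - lo i)\<^sup>2) = (\<Sum>i\<in>Wm. 1 / nm^2)"
      by (rule sum.cong) (use disj in \<open>auto simp: hi_def lo_def power_divide\<close>)
    finally show ?thesis using nmpos unfolding nd_def nm_def by (simp add: power2_eq_square)
  qed
  have V_pos: "real nd / d^2 + 1 / nm > 0" using nmpos by (simp add: add_nonneg_pos)
  have V_le: "real nd / d^2 + 1 / nm \<le> 2 / d"
  proof -
    have "real nd \<le> d" using nd_eq by linarith
    then have "real nd / d^2 \<le> 1 / d" using dpos by (simp add: field_simps power2_eq_square)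
    moreover have "1 / real nm \<le> 1 / d" using nm_ge dpos by (simp add: frac_le)
    ultimately show ?thesis by simp
  qed
  define bad where "bad = {x\<in>space P. \<bar>(\<Sum>i\<in>I. X i x) - \<mu>\<bar> \<ge> 3/2 * \<epsilon>d}"
  have pbad: "prob bad \<le> \<delta> / 2"
  proof -
    have "prob bad \<le> 2 * exp (-2 * (3/2*\<epsilon>d)\<^sup>2 / (\<Sum>i\<in>I. (hi i - lo i)\<^sup>2))"
      unfolding bad_def \<mu>_def
      by (rule H.Hoeffding_ineq_abs_ge) (use assms(17) V_eq V_pos in auto)
    also have "\<dots> \<le> 2 * exp (- ln (4 / \<delta>))"
    proof -
      have "-2 * (3/2*\<epsilon>d)\<^sup>2 / (\<Sum>i\<in>I. (hi i - lo i)\<^sup>2) \<le> -2 * (3/2*\<epsilon>d)\<^sup>2 / (2 / d)"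
      proof -
        have "2 * (3/2*\<epsilon>d)\<^sup>2 / (2 / d) \<le> 2 * (3/2*\<epsilon>d)\<^sup>2 / (real nd / d^2 + 1 / nm)"
          by (rule divide_left_mono) (use V_pos V_le dpos in \<open>auto intro: mult_pos_pos\<close>)
        then show ?thesis using V_eq by simp
      qed
      also have "\<dots> = - (9/4) * (real d * \<epsilon>d ^ 2)"
        using dpos by (simp add: field_simps power2_eq_square)
      also have "\<dots> \<le> - ln (4 / \<delta>)" using d_bound lnpos by linarith
      finally show ?thesis by simp
    qed
    also have "\<dots> = \<delta> / 2" using assms(15) by (simp add: exp_minus)
    finally show ?thesis .
  qed
  define good where "good = {\<omega> \<in> space P. tv_dist (det_est S phat t w d \<omega>) (mem_est S Wm \<omega>) > \<epsilon>d}"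
  have sub: "space P - bad \<subseteq> good"
  proof
    fix \<omega> assume w: "\<omega> \<in> space P - bad"
    then have r: "\<bar>(\<Sum>i\<in>I. X i \<omega>) - \<mu>\<bar> < 3/2 * \<epsilon>d" unfolding bad_def by auto
    define C where "C = (\<Sum>k\<le>w. phat (t + k) i0)"
    have Cerr: "\<bar>C - (w + 1) * pi1 i0\<bar> \<le> E * d"
    proof -
      have "C - (w + 1) * pi1 i0 = (\<Sum>k\<le>w. phat (t + k) i0 - state_distr P S (t + k) i0)"
      proof -
        have "(\<Sum>k\<le>w. state_distr P S (t + k) i0) = (\<Sum>k\<le>w. pi1 i0)"
          by (rule sum.cong) (use assms(4) assms(11) in auto)
        then show ?thesis unfolding C_def by (simp add: sum_subtractf)
      qed
      also have "\<bar>\<dots>\<bar> \<le> (\<Sum>k\<le>w. \<bar>phat (t + k) i0 - state_distr P S (t + k) i0\<bar>)"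
        by (rule sum_abs)
      also have "\<dots> \<le> (\<Sum>k\<le>w. e k)"
      proof (rule sum_mono)
        fix k assume "k \<in> {..w}"
        then have "\<bar>phat (t + k) i0 - state_distr P S (t + k) i0\<bar>
              \<le> tv_dist (phat (t + k)) (state_distr P S (t + k))"
          unfolding tv_dist_def
          by (intro member_le_sum) auto
        then show "\<bar>phat (t + k) i0 - state_distr P S (t + k) i0\<bar> \<le> e k"
          using assms(7) \<open>k \<in> {..w}\<close> by force
      qed
      finally show ?thesis unfolding E_def using dpos by simp
    qed
    have sumX: "(\<Sum>i\<in>I. X i \<omega>) = (\<Sum>i\<in>L. ind i \<omega>) / d - (\<Sum>i\<in>Wm. ind i \<omega>) / nm"
    proof -
      have "(\<Sum>i\<in>I. X i \<omega>) = (\<Sum>i\<in>L. X i \<omega>) + (\<Sum>i\<in>Wm. X i \<omega>)"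
        unfolding I_def using disj assms(8) by (simp add: L_def sum.union_disjoint)
      also have "(\<Sum>i\<in>L. X i \<omega>) = (\<Sum>i\<in>L. ind i \<omega> / d)"
        by (rule sum.cong) (auto simp: X_def)
      also have "(\<Sum>i\<in>Wm. X i \<omega>) = (\<Sum>i\<in>Wm. - ind i \<omega> / nm)"
        by (rule sum.cong) (use disj in \<open>auto simp: X_def\<close>)
      finally show ?thesis by (simp add: sum_divide_distrib sum_negf)
    qed
    have det: "det_est S phat t w d \<omega> i0 = ((\<Sum>i\<in>L. ind i \<omega>) + C) / d"
      unfolding det_est_def L_def C_def ind_def by simp
    have mem: "mem_est S Wm \<omega> i0 = (\<Sum>i\<in>Wm. ind i \<omega>) / nm"
      unfolding mem_est_def nm_def ind_def by simp
    define r where "r = (\<Sum>i\<in>I. X i \<omega>) - \<mu>"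
    have diff: "det_est S phat t w d \<omega> i0 - mem_est S Wm \<omega> i0
        = (pi1 i0 - pi2 i0) + r + (C - (w + 1) * pi1 i0) / d"
    proof -
      have "det_est S phat t w d \<omega> i0 - mem_est S Wm \<omega> i0 = (\<Sum>i\<in>I. X i \<omega>) + C / d"
        using det mem sumX by (simp add: add_divide_distrib)
      also have "\<dots> = real nd * pi1 i0 / d - pi2 i0 + r + C / d"
        unfolding r_def mu_eq by simp
      also have "\<dots> = (pi1 i0 - pi2 i0) + r + (C - (w + 1) * pi1 i0) / d"
      proof -
        have w1: "real w + 1 = real d - real nd" using nd_eq by linarith
        have "(C - (w + 1) * pi1 i0) / d = C / d - (real d - real nd) * pi1 i0 / d"
          using w1 by (simp add: diff_divide_distrib)
        also have "\<dots> = C / d - pi1 i0 + real nd * pi1 i0 / d"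
          using dpos by (simp add: field_simps)
        finally show ?thesis by simp
      qed
      finally show ?thesis .
    qed
    have errb: "\<bar>(C - (w + 1) * pi1 i0) / d\<bar> \<le> E"
      using Cerr dpos by (simp add: abs_divide divide_le_eq)
    have "\<bar>det_est S phat t w d \<omega> i0 - mem_est S Wm \<omega> i0\<bar> > \<epsilon>d / 2"
    proof -
      have tri: "\<bar>a + b + c\<bar> \<ge> \<bar>a\<bar> - \<bar>b\<bar> - \<bar>c\<bar>" for a b c :: real by arith
      have r': "\<bar>r\<bar> < 3/2 * \<epsilon>d" using r unfolding r_def .
      show ?thesis unfolding diff
        using tri[of "pi1 i0 - pi2 i0" r "(C - (w + 1) * pi1 i0) / d"] errb r' eps_lt E_nn m_i0
        by (rule aux)
    qed
    moreover have "tv_dist (det_est S phat t w d \<omega>) (mem_est S Wm \<omega>)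
        \<ge> 2 * \<bar>det_est S phat t w d \<omega> i0 - mem_est S Wm \<omega> i0\<bar>"
    proof (rule tv_ge_2)
      have "(\<Sum>s\<in>UNIV. det_est S phat t w d \<omega> s) = 1"
      proof -
        have h1: "(\<Sum>s\<in>UNIV. \<Sum>tau\<in>L. (if S tau \<omega> = s then 1 else 0::real)) = real nd"
          by (subst sum.swap) (simp add: nd_def)
        have h2: "(\<Sum>s\<in>UNIV. \<Sum>k\<le>w. phat (t + k) s) = real w + 1"
        proof -
          have "(\<Sum>s\<in>UNIV. \<Sum>k\<le>w. phat (t + k) s) = (\<Sum>k\<le>w. \<Sum>s\<in>UNIV. phat (t + k) s)"
            by (rule sum.swap)
          also have "\<dots> = (\<Sum>k\<le>w. 1)"
            by (rule sum.cong) (use assms(6) in \<open>auto simp: is_distr_def\<close>)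
          finally show ?thesis by simp
        qed
        have "(\<Sum>s\<in>UNIV. det_est S phat t w d \<omega> s)
           = (1 / real d) * ((\<Sum>s\<in>UNIV. \<Sum>tau\<in>L. (if S tau \<omega> = s then 1 else 0::real))
                     + (\<Sum>s\<in>UNIV. \<Sum>k\<le>w. phat (t + k) s))"
          unfolding det_est_def L_def by (simp only: sum_distrib_left[symmetric] sum.distrib)
        also have "\<dots> = (1 / real d) * (real nd + (w + 1))"
          using h1 h2 by simp
        finally show ?thesis using nd_eq dpos by simp
      qed
      moreover have "(\<Sum>s\<in>UNIV. mem_est S Wm \<omega> s) = 1"
      proof -
        have h3: "(\<Sum>s\<in>UNIV. \<Sum>tau\<in>Wm. (if S tau \<omega> = s then 1 else 0::real)) = real nm"
          by (subst sum.swap) (simp add: nm_def)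
        have "(\<Sum>s\<in>UNIV. mem_est S Wm \<omega> s)
             = (1 / real nm) * (\<Sum>s\<in>UNIV. \<Sum>tau\<in>Wm. (if S tau \<omega> = s then 1 else 0::real))"
          unfolding mem_est_def nm_def by (simp only: sum_distrib_left[symmetric])
        then show ?thesis using h3 nmpos by simp
      qed
      ultimately show "(\<Sum>s\<in>UNIV. det_est S phat t w d \<omega> s) = (\<Sum>s\<in>UNIV. mem_est S Wm \<omega> s)"
        by simp
    qed
    ultimately show "\<omega> \<in> good" using w unfolding good_def by auto
  qed
  have good_meas: "good \<in> events"
    unfolding good_def tv_dist_def det_est_def mem_est_def by measurable
  have "1 - \<delta> \<le> 1 - prob bad" using pbad assms(15) by simp
  also have "1 - prob bad = prob (space P - bad)"
    by (subst prob_compl) (auto simp: bad_def)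
  also have "\<dots> \<le> prob good" using sub good_meas by (intro finite_measure_mono)
  finally show ?thesis unfolding good_def .
qed

end
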